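(* Let $n$ be odd and let $L$ be a reduced Latin square of order $n$ with rows $\sigma_1,\dots,\sigma_n$ and columns $\pi_1,\dots,\pi_n$ (as permutations). Let $\alpha\in S_n$, $j\in[n]$, and $\Theta=(\alpha,\ \alpha\pi_j\sigma_{\alpha^{-1}(1)}^{-1},\ \alpha\pi_j)$. Then $$\mathrm{par}(\Theta(L))=\mathrm{sgn}(\sigma_{\alpha^{-1}(1)})\,\mathrm{sgn}(\pi_j)\,\mathrm{par}(L).$$
   Context: A Latin square of order $n$ is an $n\times n$ array with entries in $[n]$, each symbol once in each row and column. Permutations compose right to left. An isotopism $(\alpha,\beta,\gamma)\in S_n^3$ acts by $(\alpha,\beta,\gamma)(L)=L'$ with $L'(\alpha(r),\beta(c))=\gamma(L(r,c))$. Rows and columns are viewed as permutations: if symbol $i$ appears in the $j$th place of a row (column) $\sigma$, then $\sigma(i)=j$; so row $r$ is $\sigma_r$ with $\sigma_r(L(r,c))=c$ and column $c$ is $\pi_c$ with $\pi_c(L(r,c))=r$. $L$ is reduced if its first row and first column are the identity permutation. $\mathrm{sgn}$ is the sign of a permutation, and $\mathrm{par}(L)$ is the product of the signs of all $n$ rows and all $n$ columns of $L$. *)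

theory Defs
  imports "HOL-Combinatorics.Combinatorics"
begin

definition latin_square :: "nat \<Rightarrow> (nat \<Rightarrow> nat \<Rightarrow> nat) \<Rightarrow> bool" where
  "latin_square n L \<longleftrightarrow>
     (\<forall>r\<in>{1..n}. bij_betw (\<lambda>c. L r c) {1..n} {1..n}) \<and>
     (\<forall>c\<in>{1..n}. bij_betw (\<lambda>r. L r c) {1..n} {1..n})"

definition row_perm :: "nat \<Rightarrow> (nat \<Rightarrow> nat \<Rightarrow> nat) \<Rightarrow> nat \<Rightarrow> nat \<Rightarrow> nat" where
  "row_perm n L r = (\<lambda>i. if i \<in> {1..n} then (THE c. c \<in> {1..n} \<and> L r c = i) else i)"

definition col_perm :: "nat \<Rightarrow> (nat \<Rightarrow> nat \<Rightarrow> nat) \<Rightarrow> nat \<Rightarrow> nat \<Rightarrow> nat" where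
  "col_perm n L c = (\<lambda>i. if i \<in> {1..n} then (THE r. r \<in> {1..n} \<and> L r c = i) else i)"

definition reduced :: "nat \<Rightarrow> (nat \<Rightarrow> nat \<Rightarrow> nat) \<Rightarrow> bool" where
  "reduced n L \<longleftrightarrow> row_perm n L 1 = id \<and> col_perm n L 1 = id"

definition par :: "nat \<Rightarrow> (nat \<Rightarrow> nat \<Rightarrow> nat) \<Rightarrow> int" where
  "par n L = (\<Prod>r\<in>{1..n}. sign (row_perm n L r)) * (\<Prod>c\<in>{1..n}. sign (col_perm n L c))"

text \<open>Isotopism action: L'(alpha r, beta c) = gamma (L r c).\<close>
definition isotope :: "(nat \<Rightarrow> nat) \<Rightarrow> (nat \<Rightarrow> nat) \<Rightarrow> (nat \<Rightarrow> nat) \<Rightarrow> (nat \<Rightarrow> nat \<Rightarrow> nat) \<Rightarrow> (nat \<Rightarrow> nat \<Rightarrow> nat)" where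
  "isotope \<alpha> \<beta> \<gamma> L = (\<lambda>r c. \<gamma> (L (inv \<alpha> r) (inv \<beta> c)))"

end

theory Submission
  imports Defs
begin

lemma row_perm_char:
  assumes P: "P permutes {1..n}" and h: "\<And>c. c \<in> {1..n} \<Longrightarrow> P (M r c) = c"
  shows "row_perm n M r = P"
proof
  fix i
  show "row_perm n M r i = P i"
  proof (cases "i \<in> {1..n}")
    case True
    have Pi: "P i \<in> {1..n}" using P True by (metis permutes_in_image)
    have "P (M r (P i)) = P i" using h[OF Pi] .
    hence e: "M r (P i) = i" using permutes_inj[OF P] by (auto dest: injD)
    have "(THE c. c \<in> {1..n} \<and> M r c = i) = P i"
      by (rule the_equality) (use Pi e h in auto)
    thus ?thesis using True by (simp add: row_perm_def)
  next
    case False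
    thus ?thesis using False permutes_not_in[OF P False] unfolding row_perm_def by (simp only: if_not_P if_False)
  qed
qed

lemma col_perm_char:
  assumes P: "P permutes {1..n}" and h: "\<And>r. r \<in> {1..n} \<Longrightarrow> P (M r c) = r"
  shows "col_perm n M c = P"
proof
  fix i
  show "col_perm n M c i = P i"
  proof (cases "i \<in> {1..n}")
    case True
    have Pi: "P i \<in> {1..n}" using P True by (metis permutes_in_image)
    have "P (M (P i) c) = P i" using h[OF Pi] .
    hence e: "M (P i) c = i" using permutes_inj[OF P] by (auto dest: injD)
    have "(THE r. r \<in> {1..n} \<and> M r c = i) = P i"
      by (rule the_equality) (use Pi e h in auto)
    thus ?thesis using True by (simp add: col_perm_def)
  next
    case False
    thus ?thesis using False permutes_not_in[OF P False] unfolding col_perm_def by (simp only: if_not_P if_False)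
  qed
qed

lemma row_perm_props:
  assumes "latin_square n L" "r \<in> {1..n}"
  shows "row_perm n L r permutes {1..n}" "\<And>c. c \<in> {1..n} \<Longrightarrow> row_perm n L r (L r c) = c"
proof -
  have b: "bij_betw (\<lambda>c. L r c) {1..n} {1..n}" using assms unfolding latin_square_def by blast
  have inj: "inj_on (\<lambda>c. L r c) {1..n}" using b by (rule bij_betw_imp_inj_on)
  show h: "\<And>c. c \<in> {1..n} \<Longrightarrow> row_perm n L r (L r c) = c"
  proof -
    fix c assume c: "c \<in> {1..n}"
    have Lc: "L r c \<in> {1..n}" using b c by (rule bij_betw_apply)
    have "(THE c'. c' \<in> {1..n} \<and> L r c' = L r c) = c"
    proof (rule the_equality)
      show "c \<in> {1..n} \<and> L r c = L r c" using c by simp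
      fix c' assume "c' \<in> {1..n} \<and> L r c' = L r c"
      thus "c' = c" using inj c by (metis inj_onD)
    qed
    thus "row_perm n L r (L r c) = c" using Lc unfolding row_perm_def by (simp only: if_P)
  qed
  have eq: "\<forall>i\<in>{1..n}. inv_into {1..n} (\<lambda>c. L r c) i = row_perm n L r i"
  proof
    fix i assume i: "i \<in> {1..n}"
    have "i \<in> (\<lambda>c. L r c) ` {1..n}" using b i by (simp only: bij_betw_def)
    then obtain c where c: "c \<in> {1..n}" "i = L r c" by blast
    show "inv_into {1..n} (\<lambda>c. L r c) i = row_perm n L r i"
      using c h[OF c(1)] inv_into_f_f[OF inj c(1)] by simp
  qed
  have "bij_betw (inv_into {1..n} (\<lambda>c. L r c)) {1..n} {1..n}"
    using b by (rule bij_betw_inv_into)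
  hence "bij_betw (row_perm n L r) {1..n} {1..n}"
    using bij_betw_cong[of "{1..n}" "inv_into {1..n} (\<lambda>c. L r c)" "row_perm n L r" "{1..n}"] eq
    by blast
  moreover have "\<And>x. x \<notin> {1..n} \<Longrightarrow> row_perm n L r x = x"
    unfolding row_perm_def by (simp only: if_not_P if_False)
  ultimately show "row_perm n L r permutes {1..n}"
    by (rule bij_imp_permutes)
qed

lemma col_perm_props:
  assumes "latin_square n L" "c \<in> {1..n}"
  shows "col_perm n L c permutes {1..n}" "\<And>r. r \<in> {1..n} \<Longrightarrow> col_perm n L c (L r c) = r"
proof -
  have b: "bij_betw (\<lambda>r. L r c) {1..n} {1..n}" using assms unfolding latin_square_def by blast
  have inj: "inj_on (\<lambda>r. L r c) {1..n}" using b by (rule bij_betw_imp_inj_on)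
  show h: "\<And>r. r \<in> {1..n} \<Longrightarrow> col_perm n L c (L r c) = r"
  proof -
    fix r assume r: "r \<in> {1..n}"
    have Lc: "L r c \<in> {1..n}" using b r by (rule bij_betw_apply)
    have "(THE r'. r' \<in> {1..n} \<and> L r' c = L r c) = r"
    proof (rule the_equality)
      show "r \<in> {1..n} \<and> L r c = L r c" using r by simp
      fix r' assume "r' \<in> {1..n} \<and> L r' c = L r c"
      thus "r' = r" using inj r by (metis inj_onD)
    qed
    thus "col_perm n L c (L r c) = r" using Lc unfolding col_perm_def by (simp only: if_P)
  qed
  have eq: "\<forall>i\<in>{1..n}. inv_into {1..n} (\<lambda>r. L r c) i = col_perm n L c i"
  proof
    fix i assume i: "i \<in> {1..n}"
    have "i \<in> (\<lambda>r. L r c) ` {1..n}" using b i by (simp only: bij_betw_def)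
    then obtain r where r: "r \<in> {1..n}" "i = L r c" by blast
    show "inv_into {1..n} (\<lambda>r. L r c) i = col_perm n L c i"
      using r h[OF r(1)] inv_into_f_f[OF inj r(1)] by simp
  qed
  have "bij_betw (inv_into {1..n} (\<lambda>r. L r c)) {1..n} {1..n}"
    using b by (rule bij_betw_inv_into)
  hence "bij_betw (col_perm n L c) {1..n} {1..n}"
    using bij_betw_cong[of "{1..n}" "inv_into {1..n} (\<lambda>r. L r c)" "col_perm n L c" "{1..n}"] eq
    by blast
  moreover have "\<And>x. x \<notin> {1..n} \<Longrightarrow> col_perm n L c x = x"
    unfolding col_perm_def by (simp only: if_not_P if_False)
  ultimately show "col_perm n L c permutes {1..n}"
    by (rule bij_imp_permutes)
qed

lemma sign_pow_odd: "odd n \<Longrightarrow> sign p ^ n = sign p"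
  by (cases p rule: sign_cases) auto

theorem lemma2p5:
  fixes n :: nat and L :: "nat \<Rightarrow> nat \<Rightarrow> nat" and \<alpha> :: "nat \<Rightarrow> nat" and j :: nat
  assumes "odd n"
    and "latin_square n L"
    and "reduced n L"
    and "\<alpha> permutes {1..n}"
    and "j \<in> {1..n}"
  shows "par n (isotope \<alpha>
                  (\<alpha> \<circ> col_perm n L j \<circ> inv (row_perm n L (inv \<alpha> 1)))
                  (\<alpha> \<circ> col_perm n L j) L)
         = sign (row_perm n L (inv \<alpha> 1)) * sign (col_perm n L j) * par n L"
proof -
  let ?S = "{1..n}"
  define \<sigma> where "\<sigma> = row_perm n L"
  define \<pi> where "\<pi> = col_perm n L"
  define a where "a = inv \<alpha> 1"
  define \<beta> where "\<beta> = \<alpha> \<circ> \<pi> j \<circ> inv (\<sigma> a)"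
  define \<gamma> where "\<gamma> = \<alpha> \<circ> \<pi> j"
  define M where "M = isotope \<alpha> \<beta> \<gamma> L"
  have fin: "finite ?S" by simp
  have ia: "inv \<alpha> permutes ?S" using assms(4) by (rule permutes_inv)
  have n1: "1 \<in> ?S" using assms(1) by (cases n) auto
  have aS: "a \<in> ?S" unfolding a_def using ia n1 by (metis permutes_in_image)
  have sp: "\<And>r. r \<in> ?S \<Longrightarrow> \<sigma> r permutes ?S" "\<And>r c. r \<in> ?S \<Longrightarrow> c \<in> ?S \<Longrightarrow> \<sigma> r (L r c) = c"
    unfolding \<sigma>_def using row_perm_props[OF assms(2)] by auto
  have pp: "\<And>c. c \<in> ?S \<Longrightarrow> \<pi> c permutes ?S" "\<And>r c. r \<in> ?S \<Longrightarrow> c \<in> ?S \<Longrightarrow> \<pi> c (L r c) = r"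
    unfolding \<pi>_def using col_perm_props[OF assms(2)] by auto
  have perm: "\<And>p. p permutes ?S \<Longrightarrow> permutation p"
    using fin by (metis permutation_permutes)
  have \<beta>p: "\<beta> permutes ?S" unfolding \<beta>_def
    by (intro permutes_compose permutes_inv sp pp assms aS)
  have \<gamma>p: "\<gamma> permutes ?S" unfolding \<gamma>_def
    by (intro permutes_compose pp assms)
  have ib: "inv \<beta> permutes ?S" using \<beta>p by (rule permutes_inv)
  have ig: "inv \<gamma> permutes ?S" using \<gamma>p by (rule permutes_inv)
  have sb: "sign \<beta> = sign \<alpha> * sign (\<pi> j) * sign (\<sigma> a)" unfolding \<beta>_def
    using perm sp pp assms aS
    by (simp add: sign_compose sign_inverse permutation_compose permutation_inverse
          permutes_inv)
  have sg: "sign (inv \<gamma>) = sign \<alpha> * sign (\<pi> j)" unfolding \<gamma>_def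
    using perm pp assms \<gamma>p[unfolded \<gamma>_def]
    by (simp add: sign_compose sign_inverse permutation_compose)
  have gg: "\<And>x. inv \<gamma> (\<gamma> x) = x" using \<gamma>p by (simp add: permutes_inverses)
  have bb: "\<And>x. \<beta> (inv \<beta> x) = x" using \<beta>p by (simp add: permutes_inverses)
  have aa: "\<And>x. \<alpha> (inv \<alpha> x) = x" using assms(4) by (simp add: permutes_inverses)
  have Mdef: "\<And>r c. M r c = \<gamma> (L (inv \<alpha> r) (inv \<beta> c))" by (simp add: M_def isotope_def)
  have rowM: "\<And>r. r \<in> ?S \<Longrightarrow> row_perm n M r = \<beta> \<circ> \<sigma> (inv \<alpha> r) \<circ> inv \<gamma>"
  proof -
    fix r assume r: "r \<in> ?S"
    have r': "inv \<alpha> r \<in> ?S" using ia r by (metis permutes_in_image)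
    show "row_perm n M r = \<beta> \<circ> \<sigma> (inv \<alpha> r) \<circ> inv \<gamma>"
    proof (rule row_perm_char)
      show "\<beta> \<circ> \<sigma> (inv \<alpha> r) \<circ> inv \<gamma> permutes ?S"
        by (intro permutes_compose ig sp r' \<beta>p)
      fix c assume c: "c \<in> ?S"
      have c': "inv \<beta> c \<in> ?S" using ib c by (metis permutes_in_image)
      show "(\<beta> \<circ> \<sigma> (inv \<alpha> r) \<circ> inv \<gamma>) (M r c) = c"
        using sp(2)[OF r' c'] by (simp add: Mdef gg bb)
    qed
  qed
  have colM: "\<And>c. c \<in> ?S \<Longrightarrow> col_perm n M c = \<alpha> \<circ> \<pi> (inv \<beta> c) \<circ> inv \<gamma>"
  proof -
    fix c assume c: "c \<in> ?S"
    have c': "inv \<beta> c \<in> ?S" using ib c by (metis permutes_in_image)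
    show "col_perm n M c = \<alpha> \<circ> \<pi> (inv \<beta> c) \<circ> inv \<gamma>"
    proof (rule col_perm_char)
      show "\<alpha> \<circ> \<pi> (inv \<beta> c) \<circ> inv \<gamma> permutes ?S"
        by (intro permutes_compose ig pp c' assms(4))
      fix r assume r: "r \<in> ?S"
      have r': "inv \<alpha> r \<in> ?S" using ia r by (metis permutes_in_image)
      show "(\<alpha> \<circ> \<pi> (inv \<beta> c) \<circ> inv \<gamma>) (M r c) = r"
        using pp(2)[OF r' c'] by (simp add: Mdef gg aa)
    qed
  qed
  have srow: "\<And>r. r \<in> ?S \<Longrightarrow> sign (row_perm n M r) = sign (\<sigma> a) * sign (\<sigma> (inv \<alpha> r))"
  proof -
    fix r assume r: "r \<in> ?S"
    have r': "inv \<alpha> r \<in> ?S" using ia r by (metis permutes_in_image)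
    have "sign (row_perm n M r) = sign \<beta> * sign (\<sigma> (inv \<alpha> r)) * sign (inv \<gamma>)"
      using rowM[OF r] perm[OF \<beta>p] perm[OF sp(1)[OF r']] perm[OF ig]
      by (simp add: sign_compose permutation_compose)
    also have "\<dots> = (sign \<alpha> * sign \<alpha>) * (sign (\<pi> j) * sign (\<pi> j)) * sign (\<sigma> a) * sign (\<sigma> (inv \<alpha> r))"
      by (simp add: sb sg algebra_simps)
    finally show "sign (row_perm n M r) = sign (\<sigma> a) * sign (\<sigma> (inv \<alpha> r))" by simp
  qed
  have scol: "\<And>c. c \<in> ?S \<Longrightarrow> sign (col_perm n M c) = sign (\<pi> j) * sign (\<pi> (inv \<beta> c))"
  proof -
    fix c assume c: "c \<in> ?S"
    have c': "inv \<beta> c \<in> ?S" using ib c by (metis permutes_in_image)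
    have "sign (col_perm n M c) = sign \<alpha> * sign (\<pi> (inv \<beta> c)) * sign (inv \<gamma>)"
      using colM[OF c] perm[OF assms(4)] perm[OF pp(1)[OF c']] perm[OF ig]
      by (simp add: sign_compose permutation_compose)
    also have "\<dots> = (sign \<alpha> * sign \<alpha>) * sign (\<pi> j) * sign (\<pi> (inv \<beta> c))"
      by (simp add: sg algebra_simps)
    finally show "sign (col_perm n M c) = sign (\<pi> j) * sign (\<pi> (inv \<beta> c))" by simp
  qed
  have R: "(\<Prod>r\<in>?S. sign (row_perm n M r)) = sign (\<sigma> a) * (\<Prod>r\<in>?S. sign (\<sigma> r))"
  proof -
    have "(\<Prod>r\<in>?S. sign (row_perm n M r)) = (\<Prod>r\<in>?S. sign (\<sigma> a) * sign (\<sigma> (inv \<alpha> r)))"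
      by (rule prod.cong) (auto simp: srow)
    also have "\<dots> = sign (\<sigma> a) ^ n * (\<Prod>r\<in>?S. sign (\<sigma> (inv \<alpha> r)))"
      by (simp add: prod.distrib)
    also have "(\<Prod>r\<in>?S. sign (\<sigma> (inv \<alpha> r))) = (\<Prod>r\<in>?S. sign (\<sigma> r))"
      using prod.reindex_bij_betw[OF permutes_imp_bij[OF ia], of "\<lambda>r. sign (\<sigma> r)"] by simp
    finally show ?thesis using sign_pow_odd[OF assms(1)] by simp
  qed
  have C: "(\<Prod>c\<in>?S. sign (col_perm n M c)) = sign (\<pi> j) * (\<Prod>c\<in>?S. sign (\<pi> c))"
  proof -
    have "(\<Prod>c\<in>?S. sign (col_perm n M c)) = (\<Prod>c\<in>?S. sign (\<pi> j) * sign (\<pi> (inv \<beta> c)))"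
      by (rule prod.cong) (auto simp: scol)
    also have "\<dots> = sign (\<pi> j) ^ n * (\<Prod>c\<in>?S. sign (\<pi> (inv \<beta> c)))"
      by (simp add: prod.distrib)
    also have "(\<Prod>c\<in>?S. sign (\<pi> (inv \<beta> c))) = (\<Prod>c\<in>?S. sign (\<pi> c))"
      using prod.reindex_bij_betw[OF permutes_imp_bij[OF ib], of "\<lambda>c. sign (\<pi> c)"] by simp
    finally show ?thesis using sign_pow_odd[OF assms(1)] by simp
  qed
  have "par n M = sign (\<sigma> a) * sign (\<pi> j) * par n L"
    unfolding par_def R C \<sigma>_def \<pi>_def by (simp add: algebra_simps)
  thus ?thesis unfolding M_def \<beta>_def \<gamma>_def a_def \<sigma>_def \<pi>_def .
qed

end
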